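(* In the setting described in the context, let $q\in\{1,\dots,n\}$. The following are equivalent: (1) there exists a $q$-minitive capacity $\mu:2^{\mathcal C}\to L$ with $S_\mu(x^{(k)})=\alpha^{(k)}$ for all $k\in\{1,\dots,N\}$; (2) the reduced min–max system $(\Sigma_q)$ is consistent and there exists $A\subsetneq\mathcal C$ with $|A|=n-q$ and $f_q(A)=0$.
   Context: Let $\mathcal C=\{1,\dots,n\}$ and let $L$ be either a finite totally ordered set $0=\xi_1<\dots<\xi_l=1$ or $L=[0,1]$. A capacity is a map $\mu:2^{\mathcal C}\to L$ with $\mu(\emptyset)=0$, $\mu(\mathcal C)=1$, monotone for inclusion; it is $q$-minitive if for all $X$ with $|X|<n-q$, $\mu(X)=\min_{Y\supsetneq X,\ |Y|\ge n-q}\mu(Y)$. Sugeno integral: $S_\mu(x)=\max_{A\subseteq\mathcal C}\min(\min_{i\in A}x_i,\mu(A))$ with $\min_{i\in\emptyset}x_i=1$. Training data: $N$ pairs $(x^{(k)},\alpha^{(k)})$, $x^{(k)}\in L^n$, $\alpha^{(k)}\in L$. For $A\subsetneq\mathcal C$, $\gamma_{k,A}=\max_{i\in\mathcal C\setminus A}x^{(k)}_i$. The reduced system $(\Sigma_q)$ has unknowns $\xi_A\in L$ for $A\subsetneq\mathcal C$ with $|A|\ge n-q$ and equations $\min_{A\subsetneq\mathcal C,\ |A|\ge n-q}\max(\gamma_{k,A},\xi_A)=\alpha^{(k)}$, $k=1,\dots,N$; it is consistent if it has a solution in $L$. For such $A$, $f_q(A)=\max_{1\le k\le N}(\gamma_{k,A}\,\epsilon\,\alpha^{(k)})$,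 where $a\,\epsilon\,b=b$ if $a<b$ and $0$ if $a\ge b$. *)

theory Defs
  imports Main "HOL.Real"
begin

definition valid_scale :: "real set \<Rightarrow> bool" where
  "valid_scale L \<longleftrightarrow> L = {0..1} \<or> (finite L \<and> L \<subseteq> {0..1} \<and> 0 \<in> L \<and> 1 \<in> L)"

definition is_capacity :: "real set \<Rightarrow> nat \<Rightarrow> (nat set \<Rightarrow> real) \<Rightarrow> bool" where
  "is_capacity L n mu \<longleftrightarrow>
     (\<forall>A. A \<subseteq> {1..n} \<longrightarrow> mu A \<in> L) \<and> mu {} = 0 \<and> mu {1..n} = 1 \<and>
     (\<forall>A B. A \<subseteq> B \<longrightarrow> B \<subseteq> {1..n} \<longrightarrow> mu A \<le> mu B)"

definition q_minitive :: "nat \<Rightarrow> nat \<Rightarrow> (nat set \<Rightarrow> real) \<Rightarrow> bool" where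
  "q_minitive n q mu \<longleftrightarrow>
     (\<forall>X. X \<subseteq> {1..n} \<longrightarrow> card X < n - q \<longrightarrow>
        mu X = Min (mu ` {Y. X \<subset> Y \<and> Y \<subseteq> {1..n} \<and> card Y \<ge> n - q}))"

definition min_on :: "(nat \<Rightarrow> real) \<Rightarrow> nat set \<Rightarrow> real" where
  "min_on x A = (if A = {} then 1 else Min (x ` A))"

definition sugeno :: "nat \<Rightarrow> (nat set \<Rightarrow> real) \<Rightarrow> (nat \<Rightarrow> real) \<Rightarrow> real" where
  "sugeno n mu x = Max ((\<lambda>A. min (min_on x A) (mu A)) ` Pow {1..n})"

definition gamma :: "nat \<Rightarrow> (nat \<Rightarrow> nat \<Rightarrow> real) \<Rightarrow> nat \<Rightarrow> nat set \<Rightarrow> real" where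
  "gamma n x k A = Max ((x k) ` ({1..n} - A))"

definition sigma_idx :: "nat \<Rightarrow> nat \<Rightarrow> nat set set" where
  "sigma_idx n q = {A. A \<subset> {1..n} \<and> card A \<ge> n - q}"

definition sigma_consistent ::
  "real set \<Rightarrow> nat \<Rightarrow> nat \<Rightarrow> nat \<Rightarrow> (nat \<Rightarrow> nat \<Rightarrow> real) \<Rightarrow> (nat \<Rightarrow> real) \<Rightarrow> bool" where
  "sigma_consistent L n q N x \<alpha> \<longleftrightarrow>
     (\<exists>\<xi> :: nat set \<Rightarrow> real. (\<forall>A \<in> sigma_idx n q. \<xi> A \<in> L) \<and>
        (\<forall>k \<in> {1..N}. Min ((\<lambda>A. max (gamma n x k A) (\<xi> A)) ` sigma_idx n q) = \<alpha> k))"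

definition eps_op :: "real \<Rightarrow> real \<Rightarrow> real" where
  "eps_op a b = (if a < b then b else 0)"

text \<open>f_q(A) = max_k (gamma_{k,A} eps alpha_k); the maximum over the empty family
  (N = 0) is taken to be the bottom element 0 of L.\<close>
definition f_q :: "nat \<Rightarrow> nat \<Rightarrow> (nat \<Rightarrow> nat \<Rightarrow> real) \<Rightarrow> (nat \<Rightarrow> real) \<Rightarrow> nat set \<Rightarrow> real" where
  "f_q n N x \<alpha> A = Max (insert 0 ((\<lambda>k. eps_op (gamma n x k A) (\<alpha> k)) ` {1..N}))"

end

theory Submission
  imports Defs
begin

lemma gamma_anti:
  assumes "A \<subseteq> B" "B \<subset> {1..n}"
  shows "gamma n x k B \<le> gamma n x k A"
  unfolding gamma_def
proof (rule Max_mono)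
  show "x k ` ({1..n} - B) \<subseteq> x k ` ({1..n} - A)" using assms by blast
  show "x k ` ({1..n} - B) \<noteq> {}" using assms by blast
qed simp

lemma gamma_ge:
  assumes "i \<in> {1..n} - A"
  shows "x k i \<le> gamma n x k A"
  unfolding gamma_def using assms by (intro Max_ge) auto

lemma gamma_le:
  assumes "A \<subset> {1..n}" "\<forall>i\<in>{1..n} - A. x k i \<le> c"
  shows "gamma n x k A \<le> c"
  unfolding gamma_def using assms by (subst Max_le_iff) auto

lemma sugeno_le:
  assumes mono: "\<forall>A B. A \<subseteq> B \<longrightarrow> B \<subseteq> {1..n} \<longrightarrow> mu A \<le> mu B"
    and A: "A \<subset> {1..n}"
  shows "sugeno n mu (x k) \<le> max (gamma n x k A) (mu A)"
proof -
  have fin: "finite ((\<lambda>A. min (min_on (x k) A) (mu A)) ` Pow {1..n})" by simp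
  have ne: "(\<lambda>A. min (min_on (x k) A) (mu A)) ` Pow {1..n} \<noteq> {}" by blast
  show ?thesis unfolding sugeno_def Max_le_iff[OF fin ne]
  proof (intro ballI)
  fix v assume "v \<in> (\<lambda>A. min (min_on (x k) A) (mu A)) ` Pow {1..n}"
  then obtain B where B: "B \<subseteq> {1..n}" and v: "v = min (min_on (x k) B) (mu B)" by auto
  show "v \<le> max (gamma n x k A) (mu A)"
  proof (cases "B \<subseteq> A")
    case True
    then have "mu B \<le> mu A" using mono A by auto
    then show ?thesis using v by linarith
  next
    case False
    then obtain i where i: "i \<in> B" "i \<notin> A" by auto
    have fB: "finite B" using B finite_subset by blast
    have "min_on (x k) B \<le> x k i" unfolding min_on_def using i fB by auto
    also have "x k i \<le> gamma n x k A" using i B by (intro gamma_ge) auto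
    finally show ?thesis using v by linarith
  qed
  qed
qed

lemma sugeno_ge:
  assumes mu0: "mu {} = 0" and mu1: "mu {1..n} = 1" and n: "1 \<le> n"
    and x1: "\<forall>i\<in>{1..n}. x k i \<le> 1"
  shows "\<exists>B. B \<subset> {1..n} \<and> max (gamma n x k B) (mu B) \<le> sugeno n mu (x k)"
proof -
  let ?S = "sugeno n mu (x k)"
  have geS: "min (min_on (x k) B) (mu B) \<le> ?S" if "B \<subseteq> {1..n}" for B
    unfolding sugeno_def using that by (intro Max_ge) auto
  define B where "B = {i\<in>{1..n}. x k i > ?S}"
  have BC: "B \<subseteq> {1..n}" unfolding B_def by auto
  have fB: "finite B" using BC finite_subset by blast
  have muB: "mu B \<le> ?S"
  proof (cases "B = {}")
    case True
    then show ?thesis using geS[of "{}"] mu0 by (simp add: min_on_def)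
  next
    case False
    have "\<forall>i\<in>B. ?S < x k i" by (simp add: B_def)
    then have "?S < min_on (x k) B" unfolding min_on_def using False fB by simp
    then show ?thesis using geS[OF BC] by linarith
  qed
  have "B \<noteq> {1..n}"
  proof
    assume eq: "B = {1..n}"
    have ne: "{1..n} \<noteq> {}" using n by auto
    have "\<forall>i\<in>{1..n}. ?S < x k i" using eq unfolding B_def by blast
    then have "?S < min_on (x k) {1..n}" unfolding min_on_def using ne by simp
    moreover have "min_on (x k) {1..n} \<le> 1" unfolding min_on_def using ne x1 n
      by (auto intro!: order.trans[OF Min_le[where x="x k 1"]])
    ultimately show False using geS[of "{1..n}"] mu1 by auto
  qed
  then have Bp: "B \<subset> {1..n}" using BC by auto
  have "gamma n x k B \<le> ?S" using Bp by (intro gamma_le) (auto simp: B_def)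
  then show ?thesis using Bp muB by auto
qed

lemma Min_attained_le:
  assumes "finite S" "S \<noteq> {}"
  obtains a where "a \<in> S" "Min (h ` S) = h a"
proof -
  have "Min (h ` S) \<in> h ` S" using assms by (intro Min_in) auto
  then show ?thesis using that by auto
qed

lemma gamma_antiC:
  assumes "C = {1..n}" "A \<subseteq> B" "B \<subset> C"
  shows "gamma n x k B \<le> gamma n x k A"
  using assms(2,3) unfolding assms(1) by (rule gamma_anti)

lemma gamma_geC:
  assumes "C = {1..n}" "i \<in> C - A"
  shows "x k i \<le> gamma n x k A"
  using assms(2) unfolding assms(1) by (rule gamma_ge)

lemma gamma_leC:
  assumes "C = {1..n}" "A \<subset> C" "\<forall>i\<in>C - A. x k i \<le> c"
  shows "gamma n x k A \<le> c"
  using assms(2,3) unfolding assms(1) by (rule gamma_le)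

lemma sugeno_leC:
  assumes "C = {1..n}" "\<forall>A B. A \<subseteq> B \<longrightarrow> B \<subseteq> C \<longrightarrow> mu A \<le> mu B"
    and "A \<subset> C"
  shows "sugeno n mu (x k) \<le> max (gamma n x k A) (mu A)"
  using assms(2,3) unfolding assms(1) by (rule sugeno_le)

lemma sugeno_geC:
  assumes "C = {1..n}" "mu {} = 0" and "mu C = 1" and "1 \<le> n"
    and "\<forall>i\<in>C. x k i \<le> 1"
  shows "\<exists>B. B \<subset> C \<and> max (gamma n x k B) (mu B) \<le> sugeno n mu (x k)"
  using assms(2-5) unfolding assms(1) by (rule sugeno_ge)

theorem theorem3:
  fixes L :: "real set" and n q N :: nat
    and x :: "nat \<Rightarrow> nat \<Rightarrow> real" and \<alpha> :: "nat \<Rightarrow> real"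
  assumes "valid_scale L"
    and "q \<in> {1..n}"
    and "\<forall>k \<in> {1..N}. (\<forall>i \<in> {1..n}. x k i \<in> L) \<and> \<alpha> k \<in> L"
  shows "(\<exists>mu. is_capacity L n mu \<and> q_minitive n q mu \<and>
             (\<forall>k \<in> {1..N}. sugeno n mu (x k) = \<alpha> k))
         \<longleftrightarrow>
         (sigma_consistent L n q N x \<alpha> \<and>
          (\<exists>A. A \<subset> {1..n} \<and> card A = n - q \<and> f_q n N x \<alpha> A = 0))"
proof -
  define C where "C = {1..n}"
  have finC: "finite C" unfolding C_def by simp
  have cardC: "card C = n" unfolding C_def by simp
  have sig_eq: "sigma_idx n q = {A. A \<subset> C \<and> card A \<ge> n - q}" unfolding sigma_idx_def C_def ..
  have cap_eq: "\<And>mu. is_capacity L n mu \<longleftrightarrow> (\<forall>A. A \<subseteq> C \<longrightarrow> mu A \<in> L) \<and> mu {} = 0 \<and> mu C = 1 \<and>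
     (\<forall>A B. A \<subseteq> B \<longrightarrow> B \<subseteq> C \<longrightarrow> mu A \<le> mu B)" unfolding is_capacity_def C_def ..
  have qm_eq: "\<And>mu. q_minitive n q mu \<longleftrightarrow> (\<forall>X. X \<subseteq> C \<longrightarrow> card X < n - q \<longrightarrow>
        mu X = Min (mu ` {Y. X \<subset> Y \<and> Y \<subseteq> C \<and> card Y \<ge> n - q}))" unfolding q_minitive_def C_def ..
  have main: "(\<exists>mu. is_capacity L n mu \<and> q_minitive n q mu \<and>
             (\<forall>k \<in> {1..N}. sugeno n mu (x k) = \<alpha> k))
         \<longleftrightarrow>
         (sigma_consistent L n q N x \<alpha> \<and>
          (\<exists>A. A \<subset> C \<and> card A = n - q \<and> f_q n N x \<alpha> A = 0))"
  proof -
  have L01: "L \<subseteq> {0..1}" and L0: "0 \<in> L" and L1: "1 \<in> L"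
    using assms(1) unfolding valid_scale_def by auto
  have q1: "1 \<le> q" and qn: "q \<le> n" using assms(2) by auto
  have n1: "1 \<le> n" using q1 qn by simp
  have xL: "\<And>k i. k \<in> {1..N} \<Longrightarrow> i \<in> C \<Longrightarrow> x k i \<in> L" using assms(3) unfolding C_def by blast
  have aL: "\<And>k. k \<in> {1..N} \<Longrightarrow> \<alpha> k \<in> L" using assms(3) by auto
  have x01: "\<And>k i. k \<in> {1..N} \<Longrightarrow> i \<in> C \<Longrightarrow> 0 \<le> x k i \<and> x k i \<le> 1"
    using xL L01 by force
  have a01: "\<And>k. k \<in> {1..N} \<Longrightarrow> 0 \<le> \<alpha> k \<and> \<alpha> k \<le> 1"
    using aL L01 by force
  have finsig: "finite (sigma_idx n q)" unfolding sig_eq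
    by (rule finite_subset[of _ "Pow C"]) (use finC in auto)
  define A1 where "A1 = C - {1}"
  have one: "(1::nat) \<in> C" using n1 unfolding C_def by simp
  have A1p: "A1 \<subset> C" unfolding A1_def using one by blast
  have A1card: "card A1 = n - 1" unfolding A1_def using one finC cardC by (simp add: card_Diff_singleton)
  have A1sig: "A1 \<in> sigma_idx n q" unfolding sig_eq using A1p A1card q1 by auto
  have signe: "sigma_idx n q \<noteq> {}" using A1sig by auto
  have gam01: "\<And>k A. k \<in> {1..N} \<Longrightarrow> A \<subset> C \<Longrightarrow> 0 \<le> gamma n x k A \<and> gamma n x k A \<le> 1"
  proof -
    fix k A assume k: "k \<in> {1..N}" and A: "A \<subset> C"
    obtain i where i: "i \<in> C - A" using A by blast
    have "0 \<le> x k i" using x01[OF k] i by auto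
    also have "x k i \<le> gamma n x k A" using i by (rule gamma_geC[OF C_def])
    finally have "0 \<le> gamma n x k A" .
    moreover have "gamma n x k A \<le> 1" using A x01[OF k] by (intro gamma_leC[OF C_def]) auto
    ultimately show "0 \<le> gamma n x k A \<and> gamma n x k A \<le> 1" by simp
  qed
  show ?thesis
  proof
    assume "\<exists>mu. is_capacity L n mu \<and> q_minitive n q mu \<and>
             (\<forall>k \<in> {1..N}. sugeno n mu (x k) = \<alpha> k)"
    then obtain mu where cap: "is_capacity L n mu" and qm: "q_minitive n q mu"
      and sug: "\<forall>k \<in> {1..N}. sugeno n mu (x k) = \<alpha> k" by blast
    have muL: "\<And>A. A \<subseteq> C \<Longrightarrow> mu A \<in> L" and mu0: "mu {} = 0"
      and mu1: "mu C = 1"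
      and mono: "\<forall>A B. A \<subseteq> B \<longrightarrow> B \<subseteq> C \<longrightarrow> mu A \<le> mu B"
      using cap unfolding cap_eq by blast+
    have mu01: "\<And>A. A \<subseteq> C \<Longrightarrow> 0 \<le> mu A \<and> mu A \<le> 1"
    proof -
      fix A assume "A \<subseteq> C"
      then have "mu A \<in> {0..1}" using muL L01 by blast
      then show "0 \<le> mu A \<and> mu A \<le> 1" by simp
    qed
    have qmX: "\<And>X. X \<subseteq> C \<Longrightarrow> card X < n - q \<Longrightarrow>
        \<exists>Y. X \<subset> Y \<and> Y \<subseteq> C \<and> n - q \<le> card Y \<and> mu X = mu Y"
    proof -
      fix X assume X: "X \<subseteq> C" and cX: "card X < n - q"
      let ?SX = "{Y. X \<subset> Y \<and> Y \<subseteq> C \<and> n - q \<le> card Y}"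
      have fin: "finite ?SX" by (rule finite_subset[of _ "Pow C"]) (use finC in auto)
      have "X \<noteq> C" using cX cardC by auto
      then have "C \<in> ?SX" using X cardC by auto
      then have ne: "?SX \<noteq> {}" by blast
      obtain Y where "Y \<in> ?SX" "Min (mu ` ?SX) = mu Y" by (rule Min_attained_le[OF fin ne])
      moreover have "mu X = Min (mu ` ?SX)" using qm X cX unfolding qm_eq by auto
      ultimately show "\<exists>Y. X \<subset> Y \<and> Y \<subseteq> C \<and> n - q \<le> card Y \<and> mu X = mu Y" by auto
    qed
    have cons: "sigma_consistent L n q N x \<alpha>"
      unfolding sigma_consistent_def
    proof (intro exI[of _ mu] conjI ballI)
      fix A assume "A \<in> sigma_idx n q" then show "mu A \<in> L"
        using muL unfolding sig_eq by auto
    next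
      fix k assume k: "k \<in> {1..N}"
      let ?h = "\<lambda>A. max (gamma n x k A) (mu A)"
      have fin: "finite (?h ` sigma_idx n q)" using finsig by simp
      have ne: "?h ` sigma_idx n q \<noteq> {}" using signe by simp
      have ge: "\<alpha> k \<le> Min (?h ` sigma_idx n q)"
        unfolding Min_ge_iff[OF fin ne]
      proof
        fix v assume "v \<in> ?h ` sigma_idx n q"
        then obtain A where A: "A \<in> sigma_idx n q" "v = ?h A" by auto
        show "\<alpha> k \<le> v" using sugeno_leC[OF C_def mono, of A x k] A sug k
          unfolding sig_eq by auto
      qed
      obtain B where B: "B \<subset> C" and hB: "?h B \<le> sugeno n mu (x k)"
        using sugeno_geC[OF C_def mu0 mu1 n1, of x k] x01[OF k] by auto
      have "\<exists>A \<in> sigma_idx n q. ?h A \<le> \<alpha> k"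
      proof (cases "n - q \<le> card B")
        case True
        then have "B \<in> sigma_idx n q" using B unfolding sig_eq by auto
        then show ?thesis using hB sug k by auto
      next
        case False
        then obtain Y where Y: "B \<subset> Y" "Y \<subseteq> C" "n - q \<le> card Y" "mu B = mu Y"
          using qmX[of B] B by auto
        show ?thesis
        proof (cases "Y = C")
          case True
          then have "1 \<le> \<alpha> k" using Y mu1 hB sug k by auto
          moreover have "?h A1 \<le> 1" using gam01[OF k A1p] mu01[of A1] A1p by auto
          ultimately show ?thesis using A1sig by force
        next
          case False
          then have Ys: "Y \<in> sigma_idx n q" using Y unfolding sig_eq by auto
          have "gamma n x k Y \<le> gamma n x k B" using Y False by (intro gamma_antiC[OF C_def]) auto
          then have "?h Y \<le> ?h B" using Y by auto
          moreover have "sugeno n mu (x k) = \<alpha> k" using sug k by blast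
          ultimately have "?h Y \<le> \<alpha> k" using hB by linarith
          then show ?thesis using Ys by blast
        qed
      qed
      then have "Min (?h ` sigma_idx n q) \<le> \<alpha> k"
        using fin by (meson Min_le image_eqI order.trans)
      then show "Min (?h ` sigma_idx n q) = \<alpha> k" using ge by simp
    qed
    obtain A0 where A0: "A0 \<subset> C" "card A0 = n - q" "mu A0 = 0"
    proof (cases "q = n")
      case True
      then show ?thesis using that[of "{}"] mu0 one by auto
    next
      case False
      then obtain Y where Y: "Y \<subseteq> C" "n - q \<le> card Y" "mu {} = mu Y"
        using qmX[of "{}"] qn by auto
      obtain T where T: "T \<subseteq> Y" "card T = n - q" using obtain_subset_with_card_n[OF Y(2)] by metis
      have TC: "T \<subseteq> C" using T Y by auto
      have "n - q < n" using q1 n1 by linarith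
      then have "T \<noteq> C" using T(2) cardC by auto
      moreover have "mu T = 0"
      proof -
        have "mu T \<le> mu Y" using mono T(1) Y(1) by blast
        then show ?thesis using Y(3) mu0 mu01[OF TC] by linarith
      qed
      ultimately show ?thesis using that[of T] TC T by auto
    qed
    have "f_q n N x \<alpha> A0 = 0"
    proof -
      have "\<forall>k\<in>{1..N}. eps_op (gamma n x k A0) (\<alpha> k) = 0"
      proof
        fix k assume k: "k \<in> {1..N}"
        have "\<alpha> k \<le> max (gamma n x k A0) (mu A0)"
          using sugeno_leC[OF C_def mono A0(1), of x k] sug k by auto
        then show "eps_op (gamma n x k A0) (\<alpha> k) = 0" using A0(3) gam01[OF k A0(1)]
          unfolding eps_op_def by auto
      qed
      then have eq0: "insert 0 ((\<lambda>k. eps_op (gamma n x k A0) (\<alpha> k)) ` {1..N}) = {0}" by auto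
      show ?thesis unfolding f_q_def eq0 by simp
    qed
    then show "sigma_consistent L n q N x \<alpha> \<and>
          (\<exists>A. A \<subset> C \<and> card A = n - q \<and> f_q n N x \<alpha> A = 0)"
      using cons A0 by blast
  next
    assume "sigma_consistent L n q N x \<alpha> \<and>
          (\<exists>A. A \<subset> C \<and> card A = n - q \<and> f_q n N x \<alpha> A = 0)"
    then obtain \<xi> A0 where xiL: "\<forall>A \<in> sigma_idx n q. \<xi> A \<in> L"
      and xisol: "\<forall>k \<in> {1..N}. Min ((\<lambda>A. max (gamma n x k A) (\<xi> A)) ` sigma_idx n q) = \<alpha> k"
      and A0: "A0 \<subset> C" "card A0 = n - q" "f_q n N x \<alpha> A0 = 0"
      unfolding sigma_consistent_def by blast
    define f where "f = f_q n N x \<alpha>"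
    have finE: "\<And>A. finite (insert 0 ((\<lambda>k. eps_op (gamma n x k A) (\<alpha> k)) ` {1..N}))" by simp
    have neE: "\<And>A. insert 0 ((\<lambda>k. eps_op (gamma n x k A) (\<alpha> k)) ` {1..N}) \<noteq> {}" by simp
    have fge: "\<And>A k. k \<in> {1..N} \<Longrightarrow> eps_op (gamma n x k A) (\<alpha> k) \<le> f A"
      unfolding f_def f_q_def using finE by (intro Max_ge) auto
    have f0: "\<And>A. 0 \<le> f A"
      unfolding f_def f_q_def using finE by (intro Max_ge) auto
    have fL: "\<And>A. f A \<in> L"
    proof -
      fix A
      have "f A \<in> insert 0 ((\<lambda>k. eps_op (gamma n x k A) (\<alpha> k)) ` {1..N})"
        unfolding f_def f_q_def using finE neE by (rule Max_in)
      then show "f A \<in> L" using L0 aL unfolding eps_op_def by (auto split: if_splits)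
    qed
    have f1: "\<And>A. f A \<le> 1" using fL L01 by force
    have F1: "\<And>A k. k \<in> {1..N} \<Longrightarrow> \<alpha> k \<le> max (gamma n x k A) (f A)"
    proof -
      fix A k assume k: "k \<in> {1..N}"
      show "\<alpha> k \<le> max (gamma n x k A) (f A)"
      proof (cases "gamma n x k A < \<alpha> k")
        case True
        then show ?thesis using fge[OF k, of A] unfolding eps_op_def by auto
      qed auto
    qed
    have F2: "\<And>A. A \<in> sigma_idx n q \<Longrightarrow> f A \<le> \<xi> A"
    proof -
      fix A assume A: "A \<in> sigma_idx n q"
      have xi0: "0 \<le> \<xi> A" using xiL A L01 by force
      have "\<forall>k\<in>{1..N}. eps_op (gamma n x k A) (\<alpha> k) \<le> \<xi> A"
      proof
        fix k assume k: "k \<in> {1..N}"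
        have "\<alpha> k \<le> max (gamma n x k A) (\<xi> A)"
          using xisol k A finsig by (metis (no_types, lifting) Min_le finite_imageI image_eqI)
        then show "eps_op (gamma n x k A) (\<alpha> k) \<le> \<xi> A" using xi0 unfolding eps_op_def by auto
      qed
      then show "f A \<le> \<xi> A" unfolding f_def f_q_def using finE neE xi0
        by (subst Max_le_iff) auto
    qed
    have F3: "\<And>A B. A \<subseteq> B \<Longrightarrow> B \<subset> C \<Longrightarrow> f A \<le> f B"
    proof -
      fix A B assume AB: "A \<subseteq> B" "B \<subset> C"
      have "\<forall>k\<in>{1..N}. eps_op (gamma n x k A) (\<alpha> k) \<le> f B"
      proof
        fix k assume k: "k \<in> {1..N}"
        have "gamma n x k B \<le> gamma n x k A" using AB by (rule gamma_antiC[OF C_def])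
        then show "eps_op (gamma n x k A) (\<alpha> k) \<le> f B"
          using fge[OF k, of B] f0[of B] unfolding eps_op_def by (auto split: if_splits)
      qed
      then show "f A \<le> f B" unfolding f_def f_q_def using finE neE f0[of B, unfolded f_def]
        by (subst Max_le_iff) auto
    qed
    define g where "g Y = (if Y = C then 1 else f Y)" for Y
    define SS where "SS X = {Y. X \<subset> Y \<and> Y \<subseteq> C \<and> n - q \<le> card Y}" for X
    define mu where "mu X = (if n - q \<le> card X then g X else Min (g ` SS X))" for X
    have gL: "\<And>Y. g Y \<in> L" unfolding g_def using fL L1 by auto
    have g01: "\<And>Y. 0 \<le> g Y \<and> g Y \<le> 1" unfolding g_def using f0 f1 by auto
    have gmono: "\<And>Y Y'. Y \<subseteq> Y' \<Longrightarrow> Y' \<subseteq> C \<Longrightarrow> g Y \<le> g Y'"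
    proof -
      fix Y Y' assume YY: "Y \<subseteq> Y'" "Y' \<subseteq> C"
      show "g Y \<le> g Y'"
      proof (cases "Y' = C")
        case True then show ?thesis using g01 unfolding g_def by auto
      next
        case False
        then have "Y \<noteq> C" using YY by auto
        then show ?thesis using F3[of Y Y'] YY False unfolding g_def by auto
      qed
    qed
    have SSfin: "\<And>X. finite (SS X)" unfolding SS_def
      by (rule finite_subset[of _ "Pow C"]) (use finC in auto)
    have SSne: "\<And>X. X \<subseteq> C \<Longrightarrow> card X < n - q \<Longrightarrow> C \<in> SS X"
    proof -
      fix X assume "X \<subseteq> C" "card X < n - q"
      moreover then have "X \<noteq> C" using cardC by auto
      ultimately show "C \<in> SS X" unfolding SS_def using cardC by auto
    qed
    have Msmall: "\<And>X. X \<subseteq> C \<Longrightarrow> card X < n - q \<Longrightarrow>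
       (\<exists>Y\<in>SS X. mu X = g Y) \<and> (\<forall>Y\<in>SS X. mu X \<le> g Y)"
    proof -
      fix X assume X: "X \<subseteq> C" "card X < n - q"
      have ne: "SS X \<noteq> {}" using SSne[OF X] by blast
      have mX: "mu X = Min (g ` SS X)" unfolding mu_def using X by auto
      obtain Y where "Y \<in> SS X" "Min (g ` SS X) = g Y" by (rule Min_attained_le[OF SSfin ne])
      moreover have "\<forall>Y\<in>SS X. Min (g ` SS X) \<le> g Y" using SSfin by simp
      ultimately show "(\<exists>Y\<in>SS X. mu X = g Y) \<and> (\<forall>Y\<in>SS X. mu X \<le> g Y)" using mX by auto
    qed
    have muL: "\<And>A. A \<subseteq> C \<Longrightarrow> mu A \<in> L"
    proof -
      fix A assume A: "A \<subseteq> C"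
      show "mu A \<in> L"
      proof (cases "n - q \<le> card A")
        case True then show ?thesis unfolding mu_def using gL by simp
      next
        case False then show ?thesis using Msmall[OF A] gL by force
      qed
    qed
    have mu0: "mu {} = 0"
    proof (cases "q = n")
      case True
      then have "A0 = {}" using A0 finite_subset[OF _ finC] by (metis card_0_eq diff_self_eq_0 psubset_imp_subset)
      then show ?thesis unfolding mu_def g_def f_def using A0 True n1 by auto
    next
      case False
      then have A0ne: "A0 \<noteq> {}" using A0(2) qn by auto
      have lt: "card {} < n - q" using False qn by simp
      have "A0 \<in> SS {}" unfolding SS_def using A0 A0ne by auto
      then have "mu {} \<le> g A0" using Msmall[OF _ lt] by blast
      moreover have "g A0 = 0" unfolding g_def f_def using A0 by auto
      moreover have "0 \<le> mu {}" using muL[of "{}"] L01 by force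
      ultimately show ?thesis by simp
    qed
    have mu1: "mu C = 1" unfolding mu_def g_def using cardC by simp
    have mono: "\<forall>A B. A \<subseteq> B \<longrightarrow> B \<subseteq> C \<longrightarrow> mu A \<le> mu B"
    proof (intro allI impI)
      fix A B assume AB: "A \<subseteq> B" "B \<subseteq> C"
      have finB: "finite B" using AB finite_subset finC by blast
      have cAB: "card A \<le> card B" using card_mono[OF finB AB(1)] .
      show "mu A \<le> mu B"
      proof (cases "n - q \<le> card A")
        case True
        then show ?thesis unfolding mu_def using cAB gmono AB by auto
      next
        case cA: False
        have A: "A \<subseteq> C" using AB by auto
        show ?thesis
        proof (cases "n - q \<le> card B")
          case True
          then have "A \<noteq> B" using cA by auto
          then have "B \<in> SS A" unfolding SS_def using AB True by auto
          then show ?thesis using Msmall[OF A] cA True unfolding mu_def[of B] by auto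
        next
          case False
          obtain Y where Y: "Y \<in> SS B" "mu B = g Y" using Msmall[OF AB(2)] False by force
          then have "Y \<in> SS A" using AB unfolding SS_def by auto
          then show ?thesis using Msmall[OF A] cA Y by auto
        qed
      qed
    qed
    have cap: "is_capacity L n mu" unfolding cap_eq using muL mu0 mu1 mono by blast
    have qm: "q_minitive n q mu" unfolding qm_eq
    proof (intro allI impI)
      fix X assume X: "X \<subseteq> C" "card X < n - q"
      have "mu ` SS X = g ` SS X" unfolding mu_def SS_def by (intro image_cong) auto
      then show "mu X = Min (mu ` {Y. X \<subset> Y \<and> Y \<subseteq> C \<and> card Y \<ge> n - q})"
        using X unfolding mu_def[of X] SS_def by auto
    qed
    have sug: "\<forall>k \<in> {1..N}. sugeno n mu (x k) = \<alpha> k"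
    proof
      fix k assume k: "k \<in> {1..N}"
      let ?h = "\<lambda>A. max (gamma n x k A) (f A)"
      have "Min (?h ` sigma_idx n q) \<le> Min ((\<lambda>A. max (gamma n x k A) (\<xi> A)) ` sigma_idx n q)"
      proof -
        obtain a where a: "a \<in> sigma_idx n q"
          "Min ((\<lambda>A. max (gamma n x k A) (\<xi> A)) ` sigma_idx n q) = max (gamma n x k a) (\<xi> a)"
          by (rule Min_attained_le[OF finsig signe])
        have "Min (?h ` sigma_idx n q) \<le> ?h a" using a finsig by simp
        also have "\<dots> \<le> max (gamma n x k a) (\<xi> a)" using F2[OF a(1)] by auto
        finally show ?thesis using a by simp
      qed
      then have hle: "Min (?h ` sigma_idx n q) \<le> \<alpha> k" using xisol k by simp
      obtain a where a: "a \<in> sigma_idx n q" "Min (?h ` sigma_idx n q) = ?h a"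
        by (rule Min_attained_le[OF finsig signe])
      have ap: "a \<subset> C" "n - q \<le> card a" using a unfolding sig_eq by auto
      have "mu a = f a" unfolding mu_def g_def using ap by auto
      then have le: "sugeno n mu (x k) \<le> \<alpha> k"
        using sugeno_leC[OF C_def mono ap(1), of x k] hle a by (simp add: max_def split: if_splits)
      obtain B where B: "B \<subset> C" and hB: "max (gamma n x k B) (mu B) \<le> sugeno n mu (x k)"
        using sugeno_geC[OF C_def mu0 mu1 n1, of x k] x01[OF k] by auto
      have "\<alpha> k \<le> max (gamma n x k B) (mu B)"
      proof (cases "n - q \<le> card B")
        case True
        then have "mu B = f B" unfolding mu_def g_def using B by auto
        then show ?thesis using F1[OF k] by simp
      next
        case False
        obtain Y where Y: "Y \<in> SS B" "mu B = g Y" using Msmall[of B] B False by force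
        show ?thesis
        proof (cases "Y = C")
          case True
          then show ?thesis using Y a01[OF k] unfolding g_def by auto
        next
          case nC: False
          have Yp: "B \<subseteq> Y" "Y \<subset> C" using Y nC unfolding SS_def by auto
          have "gamma n x k Y \<le> gamma n x k B" using Yp by (rule gamma_antiC[OF C_def])
          moreover have "mu B = f Y" using Y nC unfolding g_def by simp
          ultimately show ?thesis using F1[OF k, of Y] by auto
        qed
      qed
      then show "sugeno n mu (x k) = \<alpha> k" using le hB by (simp add: max_def split: if_splits)
    qed
    show "\<exists>mu. is_capacity L n mu \<and> q_minitive n q mu \<and>
             (\<forall>k \<in> {1..N}. sugeno n mu (x k) = \<alpha> k)" using cap qm sug by blast
  qed
qed
  then show ?thesis unfolding C_def .
qed

end
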